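(* Let $X_1,\dots,X_n,R_1,\dots,R_n$ be mutually independent random variables, all real-valued or all taking values in $\mathbb{Z}_p$ (addition mod $p$), such that $\mathrm{I}(X_i;X_i+R_i)=0$ for every $i$. Then for every $i$, $$\mathrm{I}\Big(X_i;\ X_1+R_1,\dots,X_n+R_n,\ \textstyle\sum_{j=1}^n R_j\Big)=\mathrm{I}\Big(X_i;\ \textstyle\sum_{j=1}^n X_j\Big).$$
   Context: $\mathrm{I}$ denotes mutual information. *)

theory Defs
  imports "HOL-Probability.Probability"
begin

text \<open>Mutual information with the standard convention that it is \<open>\<infinity>\<close> whenever the
  joint law is not absolutely continuous w.r.t. the product of the marginals, or the
  log-density is not integrable w.r.t. the joint law (i.e. the KL divergence is \<open>+\<infinity>\<close>).
  In the finite case it coincides with the library's \<open>mutual_information\<close>.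
  We use the natural logarithm (base e); the base is irrelevant for the statement.\<close>

definition MI :: "'a measure \<Rightarrow> 'b measure \<Rightarrow> 'c measure \<Rightarrow> ('a \<Rightarrow> 'b) \<Rightarrow> ('a \<Rightarrow> 'c) \<Rightarrow> ereal" where
  "MI M S T X Y =
    (let P = distr M S X \<Otimes>\<^sub>M distr M T Y;
         Q = distr M (S \<Otimes>\<^sub>M T) (\<lambda>x. (X x, Y x))
     in if absolutely_continuous P Q \<and> integrable Q (entropy_density (exp 1) P Q)
        then ereal (prob_space.mutual_information M (exp 1) S T X Y)
        else \<infinity>)"

end

theory Submission
  imports Defs
begin


definition KLI :: "'a measure \<Rightarrow> 'a measure \<Rightarrow> ereal" where
  "KLI P Q = (if absolutely_continuous P Q \<and> integrable Q (entropy_density (exp 1) P Q)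
     then ereal (KL_divergence (exp 1) P Q) else \<infinity>)"

lemma MI_KLI: "prob_space M \<Longrightarrow> MI M S T X Y =
   KLI (distr M S X \<Otimes>\<^sub>M distr M T Y) (distr M (S \<Otimes>\<^sub>M T) (\<lambda>x. (X x, Y x)))"
  unfolding MI_def KLI_def Let_def prob_space.mutual_information_def by simp

lemma KLI_density:
  assumes sf: "sigma_finite_measure P" and f[measurable]: "f \<in> borel_measurable P"
    and Q: "Q = density P f"
  shows "KLI P Q = (if integrable Q (\<lambda>x. ln (enn2real (f x)))
     then ereal (\<integral>x. ln (enn2real (f x)) \<partial>Q) else \<infinity>)"
proof -
  have ac: "absolutely_continuous P Q" unfolding Q by (rule absolutely_continuousI_density) fact
  have sQ: "sets Q = sets P" unfolding Q by simp
  have "AE x in P. f x = RN_deriv P Q x"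
    using sigma_finite_measure.RN_deriv_unique[OF sf f Q[symmetric]] .
  then have "AE x in Q. f x = RN_deriv P Q x"
    unfolding Q using f by (subst AE_density) (auto elim: AE_mp)
  then have ae: "AE x in Q. entropy_density (exp 1) P Q x = ln (enn2real (f x))"
    by eventually_elim (simp add: entropy_density_def log_ln[symmetric])
  have m1: "entropy_density (exp 1) P Q \<in> borel_measurable Q"
    by (subst measurable_cong_sets[OF sQ refl]) simp
  have m2: "(\<lambda>x. ln (enn2real (f x))) \<in> borel_measurable Q"
    by (subst measurable_cong_sets[OF sQ refl]) measurable
  have i: "integrable Q (entropy_density (exp 1) P Q) \<longleftrightarrow> integrable Q (\<lambda>x. ln (enn2real (f x)))"
    by (rule integrable_cong_AE[OF m1 m2 ae])
  have j: "KL_divergence (exp 1) P Q = (\<integral>x. ln (enn2real (f x)) \<partial>Q)"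
    unfolding KL_divergence_def by (rule integral_cong_AE[OF m1 m2 ae])
  show ?thesis unfolding KLI_def using ac i j by simp
qed

lemma ac_distr:
  assumes "absolutely_continuous A B" "sets B = sets A" "f \<in> A \<rightarrow>\<^sub>M N"
  shows "absolutely_continuous (distr A N f) (distr B N f)"
proof -
  have fB: "f \<in> B \<rightarrow>\<^sub>M N" by (subst measurable_cong_sets[OF assms(2) refl]) (rule assms(3))
  have sp: "space B = space A" using assms(2) by (rule sets_eq_imp_space_eq)
  show ?thesis
    using assms(1) unfolding absolutely_continuous_def
    by (auto simp: null_sets_def emeasure_distr assms(3) fB sp subset_eq measurable_sets[OF assms(3)])
qed

lemma KLI_distr:
  assumes P: "prob_space P" and sQ: "sets Q = sets P"
    and T[measurable]: "T \<in> P \<rightarrow>\<^sub>M N" and T'[measurable]: "T' \<in> N \<rightarrow>\<^sub>M P"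
    and inv: "\<And>x. x \<in> space P \<Longrightarrow> T' (T x) = x"
  shows "KLI (distr P N T) (distr Q N T) = KLI P Q"
proof (cases "absolutely_continuous P Q")
  case True
  interpret P: prob_space P by fact
  have spQ: "space Q = space P" using sQ by (rule sets_eq_imp_space_eq)
  have TQ[measurable]: "T \<in> Q \<rightarrow>\<^sub>M N" by (subst measurable_cong_sets[OF sQ refl]) (rule T)
  define g where "g = RN_deriv P Q"
  have g[measurable]: "g \<in> borel_measurable P" unfolding g_def by simp
  have Qd: "Q = density P g" unfolding g_def using P.density_RN_deriv[OF True sQ] by simp
  have gT'[measurable]: "(\<lambda>y. g (T' y)) \<in> borel_measurable N" by measurable
  have "density (distr P N T) (\<lambda>y. g (T' y)) = distr (density P (\<lambda>x. g (T' (T x)))) N T"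
    by (rule density_distr) measurable
  also have "density P (\<lambda>x. g (T' (T x))) = density P g"
    by (rule density_cong) (auto simp: inv)
  finally have D: "distr Q N T = density (distr P N T) (\<lambda>y. g (T' y))" using Qd by simp
  have sf: "sigma_finite_measure (distr P N T)"
    using P.prob_space_distr[OF T] by (simp add: prob_space_imp_sigma_finite)
  have m1: "(\<lambda>y. ln (enn2real (g (T' y)))) \<in> borel_measurable N" by measurable
  have i: "integrable (distr Q N T) (\<lambda>y. ln (enn2real (g (T' y)))) \<longleftrightarrow>
      integrable Q (\<lambda>x. ln (enn2real (g x)))"
    by (subst integrable_distr_eq[OF TQ m1]) (rule Bochner_Integration.integrable_cong, auto simp: spQ inv)
  have j: "(\<integral>y. ln (enn2real (g (T' y))) \<partial>distr Q N T) = (\<integral>x. ln (enn2real (g x)) \<partial>Q)"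
    by (subst integral_distr[OF TQ m1]) (auto intro!: Bochner_Integration.integral_cong simp: spQ inv)
  have gT'': "(\<lambda>y. g (T' y)) \<in> borel_measurable (distr P N T)" using gT' by simp
  show ?thesis
    unfolding KLI_density[OF sf gT'' D] KLI_density[OF P.sigma_finite_measure_axioms g Qd] i j ..
next
  case False
  have "\<not> absolutely_continuous (distr P N T) (distr Q N T)"
  proof
    assume ac: "absolutely_continuous (distr P N T) (distr Q N T)"
    have TQ[measurable]: "T \<in> Q \<rightarrow>\<^sub>M N" by (subst measurable_cong_sets[OF sQ refl]) (rule T)
    have spQ: "space Q = space P" using sQ by (rule sets_eq_imp_space_eq)
    have "absolutely_continuous (distr (distr P N T) P T') (distr (distr Q N T) P T')"
      by (rule ac_distr[OF ac]) auto
    also have "distr (distr P N T) P T' = distr P P (T' \<circ> T)"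
      by (rule distr_distr) fact+
    also have "\<dots> = distr P P (\<lambda>x. x)"
      by (rule distr_cong) (auto simp: inv)
    also have "\<dots> = P" by (rule distr_id2) simp
    also have "distr (distr Q N T) P T' = distr Q P (T' \<circ> T)"
      by (rule distr_distr) fact+
    also have "\<dots> = distr Q P (\<lambda>x. x)"
      by (rule distr_cong) (auto simp: inv spQ)
    also have "\<dots> = Q" by (rule distr_id2) (simp add: sQ)
    finally show False using False by simp
  qed
  then show ?thesis using False unfolding KLI_def by simp
qed

lemma prob_space_pair_measure:
  assumes "prob_space A" "prob_space B" shows "prob_space (A \<Otimes>\<^sub>M B)"
proof -
  interpret pair_prob_space A B
    using assms unfolding pair_prob_space_def pair_sigma_finite_def
    by (simp add: prob_space_imp_sigma_finite)
  show ?thesis by (rule P.prob_space_axioms)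
qed

lemma KLI_pair:
  assumes P: "prob_space P" and Q: "prob_space Q" and D: "prob_space D" and sQ: "sets Q = sets P"
  shows "KLI (P \<Otimes>\<^sub>M D) (Q \<Otimes>\<^sub>M D) = KLI P Q"
proof (cases "absolutely_continuous P Q")
  case True
  interpret P: prob_space P by fact
  interpret D: prob_space D by fact
  interpret Q: prob_space Q by fact
  have spQ: "space Q = space P" using sQ by (rule sets_eq_imp_space_eq)
  define g where "g = RN_deriv P Q"
  have g[measurable]: "g \<in> borel_measurable P" unfolding g_def by simp
  have Qd: "Q = density P g" unfolding g_def using P.density_RN_deriv[OF True sQ] by simp
  have "Q \<Otimes>\<^sub>M D = density P g \<Otimes>\<^sub>M density D (\<lambda>_. 1)"
    using Qd by (simp add: density_1)
  also have "\<dots> = density (P \<Otimes>\<^sub>M D) (\<lambda>(x,y). g x * 1)"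
    by (rule pair_measure_density) (auto simp: density_1 D.sigma_finite_measure_axioms)
  also have "\<dots> = density (P \<Otimes>\<^sub>M D) (\<lambda>z. g (fst z))"
    by (rule density_cong) (auto simp: split_beta)
  finally have D1: "Q \<Otimes>\<^sub>M D = density (P \<Otimes>\<^sub>M D) (\<lambda>z. g (fst z))" .
  have sf: "sigma_finite_measure (P \<Otimes>\<^sub>M D)"
    using prob_space_pair_measure[OF P D] by (simp add: prob_space_imp_sigma_finite)
  have gf: "(\<lambda>z. g (fst z)) \<in> borel_measurable (P \<Otimes>\<^sub>M D)" by measurable
  have m1: "(\<lambda>x. ln (enn2real (g x))) \<in> borel_measurable Q"
    by (subst measurable_cong_sets[OF sQ refl]) measurable
  have fstm: "fst \<in> (Q \<Otimes>\<^sub>M D) \<rightarrow>\<^sub>M Q" by simp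
  have dq: "distr (Q \<Otimes>\<^sub>M D) Q fst = Q" by (rule D.distr_pair_fst)
  have i: "integrable (Q \<Otimes>\<^sub>M D) (\<lambda>z. ln (enn2real (g (fst z)))) \<longleftrightarrow>
      integrable Q (\<lambda>x. ln (enn2real (g x)))"
    using integrable_distr_eq[OF fstm m1] dq by simp
  have j: "(\<integral>z. ln (enn2real (g (fst z))) \<partial>(Q \<Otimes>\<^sub>M D)) = (\<integral>x. ln (enn2real (g x)) \<partial>Q)"
    using integral_distr[OF fstm m1] dq by simp
  show ?thesis
    unfolding KLI_density[OF sf gf D1] KLI_density[OF P.sigma_finite_measure_axioms g Qd] i j ..
next
  case False
  interpret D: prob_space D by fact
  interpret Q: prob_space Q by fact
  have "\<not> absolutely_continuous (P \<Otimes>\<^sub>M D) (Q \<Otimes>\<^sub>M D)"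
  proof
    assume ac: "absolutely_continuous (P \<Otimes>\<^sub>M D) (Q \<Otimes>\<^sub>M D)"
    have "absolutely_continuous P Q"
      unfolding absolutely_continuous_def
    proof
      fix A assume A: "A \<in> null_sets P"
      then have As: "A \<in> sets P" by auto
      have "A \<times> space D \<in> null_sets (P \<Otimes>\<^sub>M D)"
        using A by (simp add: null_sets_def D.emeasure_pair_measure_Times)
      then have "A \<times> space D \<in> null_sets (Q \<Otimes>\<^sub>M D)"
        using ac unfolding absolutely_continuous_def by auto
      then have "emeasure Q A * emeasure D (space D) = 0"
        using As sQ by (simp add: null_sets_def D.emeasure_pair_measure_Times)
      then show "A \<in> null_sets Q" using As sQ by (simp add: null_sets_def D.emeasure_space_1)
    qed
    then show False using False by simp
  qed
  then show ?thesis using False unfolding KLI_def by simp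
qed



lemma pair_assoc:
  assumes A: "prob_space A" and B: "prob_space B" and C: "prob_space C"
  shows "distr ((A \<Otimes>\<^sub>M B) \<Otimes>\<^sub>M C) (A \<Otimes>\<^sub>M (B \<Otimes>\<^sub>M C)) (\<lambda>p. (fst (fst p), (snd (fst p), snd p)))
      = A \<Otimes>\<^sub>M (B \<Otimes>\<^sub>M C)"
proof (rule pair_measure_eqI[symmetric])
  interpret A: prob_space A by fact
  interpret B: prob_space B by fact
  interpret C: prob_space C by fact
  have BC: "prob_space (B \<Otimes>\<^sub>M C)" by (rule prob_space_pair_measure[OF B C])
  then interpret BC: prob_space "B \<Otimes>\<^sub>M C" .
  show "sigma_finite_measure A" by (rule A.sigma_finite_measure_axioms)
  show "sigma_finite_measure (B \<Otimes>\<^sub>M C)" by (rule BC.sigma_finite_measure_axioms)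
  show "sets (A \<Otimes>\<^sub>M (B \<Otimes>\<^sub>M C)) = sets (distr ((A \<Otimes>\<^sub>M B) \<Otimes>\<^sub>M C) (A \<Otimes>\<^sub>M (B \<Otimes>\<^sub>M C)) (\<lambda>p. (fst (fst p), (snd (fst p), snd p))))"
    by simp
  fix X E assume X: "X \<in> sets A" and E: "E \<in> sets (B \<Otimes>\<^sub>M C)"
  have m: "(\<lambda>p. (fst (fst p), (snd (fst p), snd p))) \<in> (A \<Otimes>\<^sub>M B) \<Otimes>\<^sub>M C \<rightarrow>\<^sub>M A \<Otimes>\<^sub>M (B \<Otimes>\<^sub>M C)"
    by measurable
  have XE: "X \<times> E \<in> sets (A \<Otimes>\<^sub>M (B \<Otimes>\<^sub>M C))" using X E by simp
  have [measurable]: "X \<in> sets A" "E \<in> sets (B \<Otimes>\<^sub>M C)" using X E by auto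
  have "emeasure (distr ((A \<Otimes>\<^sub>M B) \<Otimes>\<^sub>M C) (A \<Otimes>\<^sub>M (B \<Otimes>\<^sub>M C)) (\<lambda>p. (fst (fst p), (snd (fst p), snd p)))) (X \<times> E)
     = (\<integral>\<^sup>+p. indicator (X \<times> E) ((\<lambda>p. (fst (fst p), (snd (fst p), snd p))) p) \<partial>((A \<Otimes>\<^sub>M B) \<Otimes>\<^sub>M C))"
    (is "?L = ?R")
  proof -
    let ?f = "\<lambda>p. (fst (fst p), (snd (fst p), snd p))"
    have "?L = emeasure ((A \<Otimes>\<^sub>M B) \<Otimes>\<^sub>M C) (?f -` (X \<times> E) \<inter> space ((A \<Otimes>\<^sub>M B) \<Otimes>\<^sub>M C))"
      by (rule emeasure_distr[OF m XE])
    also have "\<dots> = (\<integral>\<^sup>+p. indicator (?f -` (X \<times> E) \<inter> space ((A \<Otimes>\<^sub>M B) \<Otimes>\<^sub>M C)) p \<partial>((A \<Otimes>\<^sub>M B) \<Otimes>\<^sub>M C))"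
      by (rule nn_integral_indicator[symmetric]) (rule measurable_sets[OF m XE])
    also have "\<dots> = ?R"
      by (rule nn_integral_cong) (auto simp: indicator_def)
    finally show ?thesis .
  qed
  also have "\<dots> = (\<integral>\<^sup>+q. \<integral>\<^sup>+z. indicator X (fst q) * indicator E (snd q, z) \<partial>C \<partial>(A \<Otimes>\<^sub>M B))"
    by (subst C.nn_integral_fst[symmetric]) (auto simp: split_beta indicator_def intro!: nn_integral_cong)
  also have "\<dots> = (\<integral>\<^sup>+q. indicator X (fst q) * (\<integral>\<^sup>+z. indicator E (snd q, z) \<partial>C) \<partial>(A \<Otimes>\<^sub>M B))"
    by (rule nn_integral_cong) (simp add: nn_integral_cmult)
  also have "\<dots> = (\<integral>\<^sup>+x. \<integral>\<^sup>+y. indicator X x * (\<integral>\<^sup>+z. indicator E (y, z) \<partial>C) \<partial>B \<partial>A)"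
    by (subst B.nn_integral_fst[symmetric]) (auto simp: split_beta)
  also have "\<dots> = (\<integral>\<^sup>+x. indicator X x * emeasure (B \<Otimes>\<^sub>M C) E \<partial>A)"
  proof (rule nn_integral_cong)
    fix x
    have "(\<integral>\<^sup>+y. indicator X x * (\<integral>\<^sup>+z. indicator E (y, z) \<partial>C) \<partial>B)
        = indicator X x * (\<integral>\<^sup>+y. \<integral>\<^sup>+z. indicator E (y, z) \<partial>C \<partial>B)"
      by (rule nn_integral_cmult) measurable
    also have "(\<integral>\<^sup>+y. \<integral>\<^sup>+z. indicator E (y, z) \<partial>C \<partial>B) = emeasure (B \<Otimes>\<^sub>M C) E"
      by (subst C.nn_integral_fst) (auto simp: nn_integral_indicator)
    finally show "(\<integral>\<^sup>+y. indicator X x * (\<integral>\<^sup>+z. indicator E (y, z) \<partial>C) \<partial>B) = indicator X x * emeasure (B \<Otimes>\<^sub>M C) E" .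
  qed
  also have "\<dots> = emeasure A X * emeasure (B \<Otimes>\<^sub>M C) E"
    by (simp add: nn_integral_multc X)
  finally show "emeasure A X * emeasure (B \<Otimes>\<^sub>M C) E =
     emeasure (distr ((A \<Otimes>\<^sub>M B) \<Otimes>\<^sub>M C) (A \<Otimes>\<^sub>M (B \<Otimes>\<^sub>M C)) (\<lambda>p. (fst (fst p), (snd (fst p), snd p)))) (X \<times> E)" ..
qed



lemma distr_distr':
  "g \<in> N \<rightarrow>\<^sub>M L \<Longrightarrow> f \<in> M \<rightarrow>\<^sub>M N \<Longrightarrow> distr M L (\<lambda>x. g (f x)) = distr (distr M N f) L g"
  by (simp add: distr_distr comp_def)

lemma MI_main:
  fixes X :: "'a \<Rightarrow> 's" and W :: "'a \<Rightarrow> 't" and Y :: "'a \<Rightarrow> 'u" and Z :: "'a \<Rightarrow> 'v"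
    and g :: "'t \<times> 'u \<Rightarrow> 'v" and h :: "'v \<Rightarrow> 't \<times> 'u"
  assumes M: "prob_space M"
    and X[measurable]: "X \<in> M \<rightarrow>\<^sub>M S" and W[measurable]: "W \<in> M \<rightarrow>\<^sub>M T"
    and Y[measurable]: "Y \<in> M \<rightarrow>\<^sub>M U" and Z[measurable]: "Z \<in> M \<rightarrow>\<^sub>M V"
    and ind: "distr M (S \<Otimes>\<^sub>M T) (\<lambda>\<omega>. (X \<omega>, W \<omega>)) \<Otimes>\<^sub>M distr M U Y =
       distr M ((S \<Otimes>\<^sub>M T) \<Otimes>\<^sub>M U) (\<lambda>\<omega>. ((X \<omega>, W \<omega>), Y \<omega>))"
    and g[measurable]: "g \<in> T \<Otimes>\<^sub>M U \<rightarrow>\<^sub>M V" and h[measurable]: "h \<in> V \<rightarrow>\<^sub>M T \<Otimes>\<^sub>M U"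
    and hg: "\<And>x. x \<in> space (T \<Otimes>\<^sub>M U) \<Longrightarrow> h (g x) = x"
    and Zg: "\<And>\<omega>. \<omega> \<in> space M \<Longrightarrow> Z \<omega> = g (W \<omega>, Y \<omega>)"
  shows "MI M S V X Z = MI M S T X W"
proof -
  interpret prob_space M by fact
  define dX where "dX = distr M S X"
  define dW where "dW = distr M T W"
  define dY where "dY = distr M U Y"
  define dZ where "dZ = distr M V Z"
  define dWY where "dWY = distr M (T \<Otimes>\<^sub>M U) (\<lambda>\<omega>. (W \<omega>, Y \<omega>))"
  define J0 where "J0 = distr M (S \<Otimes>\<^sub>M T) (\<lambda>\<omega>. (X \<omega>, W \<omega>))"
  define J3 where "J3 = distr M (S \<Otimes>\<^sub>M (T \<Otimes>\<^sub>M U)) (\<lambda>\<omega>. (X \<omega>, (W \<omega>, Y \<omega>)))"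
  have pX: "prob_space dX" unfolding dX_def by (rule prob_space_distr) simp
  have pW: "prob_space dW" unfolding dW_def by (rule prob_space_distr) simp
  have pY: "prob_space dY" unfolding dY_def by (rule prob_space_distr) simp
  have pZ: "prob_space dZ" unfolding dZ_def by (rule prob_space_distr) simp
  have pWY: "prob_space dWY" unfolding dWY_def by (rule prob_space_distr) simp
  have pJ0: "prob_space J0" unfolding J0_def by (rule prob_space_distr) simp
  have pJ3: "prob_space J3" unfolding J3_def by (rule prob_space_distr) simp
  define F where "F = (\<lambda>p::'s \<times> 't \<times> 'u. (fst p, g (snd p)))"
  define F' where "F' = (\<lambda>p::'s \<times> 'v. (fst p, h (snd p)))"
  have Fm: "F \<in> S \<Otimes>\<^sub>M (T \<Otimes>\<^sub>M U) \<rightarrow>\<^sub>M S \<Otimes>\<^sub>M V" unfolding F_def by measurable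
  have F'm: "F' \<in> S \<Otimes>\<^sub>M V \<rightarrow>\<^sub>M S \<Otimes>\<^sub>M (T \<Otimes>\<^sub>M U)" unfolding F'_def by measurable
  have "dZ = distr M V (\<lambda>\<omega>. g (W \<omega>, Y \<omega>))" unfolding dZ_def by (rule distr_cong) (auto simp: Zg)
  also have "\<dots> = distr dWY V g" unfolding dWY_def by (rule distr_distr'[OF g]) simp
  finally have dZ: "dZ = distr dWY V g" .
  have "dX \<Otimes>\<^sub>M dZ = distr dX S (\<lambda>x. x) \<Otimes>\<^sub>M distr dWY V g"
    using dZ by (simp add: distr_id2 dX_def)
  also have "\<dots> = distr (dX \<Otimes>\<^sub>M dWY) (S \<Otimes>\<^sub>M V) (\<lambda>(x, y). (x, g y))"
  proof (rule pair_measure_distr)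
    show "sigma_finite_measure (distr dWY V g)" using pZ unfolding dZ by (rule prob_space_imp_sigma_finite)
    show "(\<lambda>x. x) \<in> dX \<rightarrow>\<^sub>M S" unfolding dX_def by simp
    show "g \<in> dWY \<rightarrow>\<^sub>M V" unfolding dWY_def by simp
  qed
  also have "\<dots> = distr (dX \<Otimes>\<^sub>M dWY) (S \<Otimes>\<^sub>M V) F"
    by (rule distr_cong) (auto simp: F_def)
  finally have L1: "dX \<Otimes>\<^sub>M dZ = distr (dX \<Otimes>\<^sub>M dWY) (S \<Otimes>\<^sub>M V) F" .
  have "distr M (S \<Otimes>\<^sub>M V) (\<lambda>\<omega>. (X \<omega>, Z \<omega>)) = distr M (S \<Otimes>\<^sub>M V) (\<lambda>\<omega>. F (X \<omega>, (W \<omega>, Y \<omega>)))"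
    by (rule distr_cong) (auto simp: F_def Zg)
  also have "\<dots> = distr J3 (S \<Otimes>\<^sub>M V) F"
    unfolding J3_def by (rule distr_distr'[OF Fm]) simp
  finally have L2: "distr M (S \<Otimes>\<^sub>M V) (\<lambda>\<omega>. (X \<omega>, Z \<omega>)) = distr J3 (S \<Otimes>\<^sub>M V) F" .
  have sPX: "sets (dX \<Otimes>\<^sub>M dWY) = sets (S \<Otimes>\<^sub>M (T \<Otimes>\<^sub>M U))"
    unfolding dX_def dWY_def by (rule sets_pair_measure_cong) simp_all
  have Fm2: "F \<in> dX \<Otimes>\<^sub>M dWY \<rightarrow>\<^sub>M S \<Otimes>\<^sub>M V"
    by (subst measurable_cong_sets[OF sPX refl]) (rule Fm)
  have F'm2: "F' \<in> S \<Otimes>\<^sub>M V \<rightarrow>\<^sub>M dX \<Otimes>\<^sub>M dWY"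
    by (subst measurable_cong_sets[OF refl sPX]) (rule F'm)
  have inv: "F' (F x) = x" if "x \<in> space (dX \<Otimes>\<^sub>M dWY)" for x
  proof -
    have "snd x \<in> space (T \<Otimes>\<^sub>M U)"
    proof -
      have "x \<in> space dX \<times> space dWY" using that by (simp only: space_pair_measure)
      then have "snd x \<in> space dWY" by (simp only: mem_Times_iff)
      then show ?thesis unfolding dWY_def by simp
    qed
    then show "F' (F x) = x" by (simp add: F_def F'_def hg)
  qed
  have sJ3: "sets J3 = sets (dX \<Otimes>\<^sub>M dWY)" unfolding sPX J3_def by simp
  have "MI M S V X Z = KLI (dX \<Otimes>\<^sub>M dZ) (distr M (S \<Otimes>\<^sub>M V) (\<lambda>\<omega>. (X \<omega>, Z \<omega>)))"
    unfolding dX_def dZ_def by (rule MI_KLI[OF M])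
  also have "\<dots> = KLI (distr (dX \<Otimes>\<^sub>M dWY) (S \<Otimes>\<^sub>M V) F) (distr J3 (S \<Otimes>\<^sub>M V) F)"
    by (simp only: L1 L2)
  also have "\<dots> = KLI (dX \<Otimes>\<^sub>M dWY) J3"
    by (rule KLI_distr[OF prob_space_pair_measure[OF pX pWY] sJ3 Fm2 F'm2 inv])
  finally have LHS: "MI M S V X Z = KLI (dX \<Otimes>\<^sub>M dWY) J3" .
  define A3 where "A3 = (\<lambda>p::('s \<times> 't) \<times> 'u. (fst (fst p), (snd (fst p), snd p)))"
  define A3' where "A3' = (\<lambda>p::'s \<times> ('t \<times> 'u). ((fst p, fst (snd p)), snd (snd p)))"
  have A3m: "A3 \<in> (S \<Otimes>\<^sub>M T) \<Otimes>\<^sub>M U \<rightarrow>\<^sub>M S \<Otimes>\<^sub>M (T \<Otimes>\<^sub>M U)" unfolding A3_def by measurable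
  have A3'm: "A3' \<in> S \<Otimes>\<^sub>M (T \<Otimes>\<^sub>M U) \<rightarrow>\<^sub>M (S \<Otimes>\<^sub>M T) \<Otimes>\<^sub>M U" unfolding A3'_def by measurable
  define J2 where "J2 = distr M ((S \<Otimes>\<^sub>M T) \<Otimes>\<^sub>M U) (\<lambda>\<omega>. ((X \<omega>, W \<omega>), Y \<omega>))"
  have J2: "J2 = J0 \<Otimes>\<^sub>M dY" unfolding J2_def J0_def dY_def using ind by simp
  have "J3 = distr M (S \<Otimes>\<^sub>M (T \<Otimes>\<^sub>M U)) (\<lambda>\<omega>. A3 ((X \<omega>, W \<omega>), Y \<omega>))"
    unfolding J3_def A3_def by simp
  also have "\<dots> = distr J2 (S \<Otimes>\<^sub>M (T \<Otimes>\<^sub>M U)) A3"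
    unfolding J2_def by (rule distr_distr'[OF A3m]) simp
  finally have J3: "J3 = distr (J0 \<Otimes>\<^sub>M dY) (S \<Otimes>\<^sub>M (T \<Otimes>\<^sub>M U)) A3" unfolding J2 .
  have "dWY = distr M (T \<Otimes>\<^sub>M U) (\<lambda>\<omega>. (snd (fst ((X \<omega>, W \<omega>), Y \<omega>)), snd ((X \<omega>, W \<omega>), Y \<omega>)))"
    unfolding dWY_def by simp
  also have "\<dots> = distr J2 (T \<Otimes>\<^sub>M U) (\<lambda>p. (snd (fst p), snd p))"
    unfolding J2_def by (rule distr_distr') simp_all
  also have "\<dots> = distr (J0 \<Otimes>\<^sub>M dY) (T \<Otimes>\<^sub>M U) (\<lambda>(x, y). (snd x, y))"
    unfolding J2 by (rule distr_cong) (auto simp: split_beta)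
  also have "\<dots> = distr J0 T snd \<Otimes>\<^sub>M distr dY U (\<lambda>x. x)"
  proof (rule pair_measure_distr[symmetric])
    show "snd \<in> J0 \<rightarrow>\<^sub>M T" unfolding J0_def by simp
    show "(\<lambda>x. x) \<in> dY \<rightarrow>\<^sub>M U" unfolding dY_def by simp
    show "sigma_finite_measure (distr dY U (\<lambda>x. x))"
      using pY unfolding dY_def by (simp add: distr_id2 prob_space_imp_sigma_finite)
  qed
  also have "distr J0 T snd = dW"
    unfolding J0_def dW_def by (subst distr_distr'[symmetric]) simp_all
  also have "distr dY U (\<lambda>x. x) = dY" unfolding dY_def by (rule distr_id2) simp
  finally have dWY: "dWY = dW \<Otimes>\<^sub>M dY" .
  have "dX \<Otimes>\<^sub>M dWY = distr ((dX \<Otimes>\<^sub>M dW) \<Otimes>\<^sub>M dY) (dX \<Otimes>\<^sub>M (dW \<Otimes>\<^sub>M dY)) A3"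
    unfolding dWY A3_def by (rule pair_assoc[symmetric, OF pX pW pY])
  also have "\<dots> = distr ((dX \<Otimes>\<^sub>M dW) \<Otimes>\<^sub>M dY) (S \<Otimes>\<^sub>M (T \<Otimes>\<^sub>M U)) A3"
    by (rule distr_cong) (simp_all only: dX_def dW_def dY_def sets_pair_measure_cong[OF sets_distr sets_pair_measure_cong[OF sets_distr sets_distr]])
  finally have P3: "dX \<Otimes>\<^sub>M dWY = distr ((dX \<Otimes>\<^sub>M dW) \<Otimes>\<^sub>M dY) (S \<Otimes>\<^sub>M (T \<Otimes>\<^sub>M U)) A3" .
  have sP3: "sets ((dX \<Otimes>\<^sub>M dW) \<Otimes>\<^sub>M dY) = sets ((S \<Otimes>\<^sub>M T) \<Otimes>\<^sub>M U)"
    unfolding dX_def dW_def dY_def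
    by (rule sets_pair_measure_cong[OF sets_pair_measure_cong[OF sets_distr sets_distr] sets_distr])
  have sJ0: "sets (J0 \<Otimes>\<^sub>M dY) = sets ((S \<Otimes>\<^sub>M T) \<Otimes>\<^sub>M U)"
    unfolding J0_def dY_def by (rule sets_pair_measure_cong[OF sets_distr sets_distr])
  have sXW: "sets (dX \<Otimes>\<^sub>M dW) = sets (S \<Otimes>\<^sub>M T)"
    unfolding dX_def dW_def by (rule sets_pair_measure_cong[OF sets_distr sets_distr])
  have A3m2: "A3 \<in> (dX \<Otimes>\<^sub>M dW) \<Otimes>\<^sub>M dY \<rightarrow>\<^sub>M S \<Otimes>\<^sub>M (T \<Otimes>\<^sub>M U)"
    by (subst measurable_cong_sets[OF sP3 refl]) (rule A3m)
  have A3'm2: "A3' \<in> S \<Otimes>\<^sub>M (T \<Otimes>\<^sub>M U) \<rightarrow>\<^sub>M (dX \<Otimes>\<^sub>M dW) \<Otimes>\<^sub>M dY"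
    by (subst measurable_cong_sets[OF refl sP3]) (rule A3'm)
  have inv3: "A3' (A3 x) = x" for x by (simp add: A3_def A3'_def)
  have "KLI (dX \<Otimes>\<^sub>M dWY) J3 = KLI (distr ((dX \<Otimes>\<^sub>M dW) \<Otimes>\<^sub>M dY) (S \<Otimes>\<^sub>M (T \<Otimes>\<^sub>M U)) A3)
       (distr (J0 \<Otimes>\<^sub>M dY) (S \<Otimes>\<^sub>M (T \<Otimes>\<^sub>M U)) A3)"
    by (simp only: P3 J3)
  also have "\<dots> = KLI ((dX \<Otimes>\<^sub>M dW) \<Otimes>\<^sub>M dY) (J0 \<Otimes>\<^sub>M dY)"
    by (rule KLI_distr[OF prob_space_pair_measure[OF prob_space_pair_measure[OF pX pW] pY] _ A3m2 A3'm2 inv3])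
       (simp only: sP3 sJ0)
  also have "\<dots> = KLI (dX \<Otimes>\<^sub>M dW) J0"
    by (rule KLI_pair[OF prob_space_pair_measure[OF pX pW] pJ0 pY]) (simp only: sXW J0_def sets_distr)
  also have "\<dots> = MI M S T X W"
    unfolding dX_def dW_def J0_def by (rule MI_KLI[OF M, symmetric])
  finally show ?thesis using LHS by simp
qed



lemma indep_split:
  fixes A B :: "'i \<Rightarrow> 'a \<Rightarrow> 'b" and S :: "'b measure"
  assumes M: "prob_space M" and I: "finite I" "I \<noteq> {}"
    and pairs: "prob_space.indep_vars M (\<lambda>_. S \<Otimes>\<^sub>M S) (\<lambda>j \<omega>. (A j \<omega>, B j \<omega>)) I"
    and each: "\<And>j. j \<in> I \<Longrightarrow> prob_space.indep_var M S (A j) S (B j)"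
  shows "prob_space.indep_vars M (\<lambda>_. S) (case_sum A B) (I <+> I)"
proof -
  interpret prob_space M by fact
  have rvA: "random_variable S (A j)" if "j \<in> I" for j using each[OF that] by (rule indep_var_rv1)
  have rvB: "random_variable S (B j)" if "j \<in> I" for j using each[OF that] by (rule indep_var_rv2)
  have rv: "random_variable S (case_sum A B k)" if "k \<in> I <+> I" for k
    using that rvA rvB by (auto)
  have fin: "finite (I <+> I)" using I by simp
  have ne: "I <+> I \<noteq> {}" using I by auto
  show ?thesis
  proof (subst indep_vars_finite[OF ne fin, where E="\<lambda>_. sets S"])
    show "sets S = sigma_sets (space S) (sets S)" for i by (simp add: sets.sigma_sets_eq)
    show "Int_stable (sets S)" for i by (auto simp: Int_stable_def)
    show "space S \<in> sets S" for i by simp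
    show "sets S \<subseteq> Pow (space S)" for i using sets.sets_into_space by auto
    show "random_variable S (case_sum A B i)" if "i \<in> I <+> I" for i using rv[OF that] .
    show "\<forall>E\<in>(\<Pi> i\<in>I <+> I. sets S). prob (\<Inter>j\<in>I <+> I. case_sum A B j -` E j \<inter> space M) =
        (\<Prod>j\<in>I <+> I. prob (case_sum A B j -` E j \<inter> space M))"
    proof
      fix E assume E: "E \<in> (\<Pi> i\<in>I <+> I. sets S)"
      have EL: "E (Inl j) \<in> sets S" if "j \<in> I" for j using E that by auto
      have ER: "E (Inr j) \<in> sets S" if "j \<in> I" for j using E that by auto
      have "(\<Inter>j\<in>I <+> I. case_sum A B j -` E j \<inter> space M) =
          (\<Inter>j\<in>I. (\<lambda>\<omega>. (A j \<omega>, B j \<omega>)) -` (E (Inl j) \<times> E (Inr j)) \<inter> space M)"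
        using I(2) by (auto elim!: PlusE; metis InlI InrI sum.case)
      then have "prob (\<Inter>j\<in>I <+> I. case_sum A B j -` E j \<inter> space M) =
          prob (\<Inter>j\<in>I. (\<lambda>\<omega>. (A j \<omega>, B j \<omega>)) -` (E (Inl j) \<times> E (Inr j)) \<inter> space M)" by simp
      also have "\<dots> = (\<Prod>j\<in>I. prob ((\<lambda>\<omega>. (A j \<omega>, B j \<omega>)) -` (E (Inl j) \<times> E (Inr j)) \<inter> space M))"
        by (rule indep_varsD_finite[OF pairs I(2) I(1)]) (simp add: EL ER)
      also have "\<dots> = (\<Prod>j\<in>I. prob (A j -` E (Inl j) \<inter> space M) * prob (B j -` E (Inr j) \<inter> space M))"
        by (rule prod.cong[OF refl]) (rule indep_varD[OF each EL ER])
      also have "\<dots> = (\<Prod>j\<in>I <+> I. prob (case_sum A B j -` E j \<inter> space M))"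
        using I(1) by (simp add: prod.Plus prod.distrib comp_def)
      finally show "prob (\<Inter>j\<in>I <+> I. case_sum A B j -` E j \<inter> space M) =
        (\<Prod>j\<in>I <+> I. prob (case_sum A B j -` E j \<inter> space M))" .
    qed
  qed
qed



lemma MI_zero_indep:
  assumes M: "prob_space M" and X: "X \<in> M \<rightarrow>\<^sub>M S" and Y: "Y \<in> M \<rightarrow>\<^sub>M S"
    and mi: "MI M S S X Y = 0"
  shows "prob_space.indep_var M S X S Y"
proof -
  interpret information_space M "exp 1"
    using M by (simp add: information_space_def information_space_axioms_def)
  from mi have c: "absolutely_continuous (distr M S X \<Otimes>\<^sub>M distr M S Y) (distr M (S \<Otimes>\<^sub>M S) (\<lambda>x. (X x, Y x)))
     \<and> integrable (distr M (S \<Otimes>\<^sub>M S) (\<lambda>x. (X x, Y x))) (entropy_density (exp 1) (distr M S X \<Otimes>\<^sub>M distr M S Y) (distr M (S \<Otimes>\<^sub>M S) (\<lambda>x. (X x, Y x))))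
     \<and> mutual_information (exp 1) S S X Y = 0"
    unfolding MI_def Let_def by (auto split: if_splits)
  show ?thesis
    using c X Y by (subst mutual_information_indep_vars) simp
qed

lemma vec_indep:
  fixes X R :: "nat \<Rightarrow> 'a \<Rightarrow> 'b" and S :: "'b measure" and \<phi> :: "'b \<times> 'b \<Rightarrow> 'b"
  assumes M: "prob_space M" and I: "finite I" "I \<noteq> {}"
    and ind: "prob_space.indep_vars M (\<lambda>_. S) (case_sum X R) (I <+> I)"
    and \<phi>[measurable]: "\<phi> \<in> S \<Otimes>\<^sub>M S \<rightarrow>\<^sub>M S"
    and each: "\<And>j. j \<in> I \<Longrightarrow> prob_space.indep_var M S (X j) S (\<lambda>\<omega>. \<phi> (X j \<omega>, R j \<omega>))"
  shows "prob_space.indep_var M (PiM I (\<lambda>_. S)) (\<lambda>\<omega>. \<lambda>j\<in>I. X j \<omega>)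
                                 (PiM I (\<lambda>_. S)) (\<lambda>\<omega>. \<lambda>j\<in>I. \<phi> (X j \<omega>, R j \<omega>))"
proof -
  interpret prob_space M by fact
  define Y where "Y = (\<lambda>j \<omega>. \<phi> (X j \<omega>, R j \<omega>))"
  define K where "K = (\<lambda>j::nat. {Inl j, Inr j} :: (nat + nat) set)"
  have r: "indep_vars (\<lambda>j. PiM (K j) (\<lambda>_. S)) (\<lambda>j \<omega>. restrict (\<lambda>k. case_sum X R k \<omega>) (K j)) I"
    by (rule indep_vars_restrict[OF ind]) (auto simp: K_def disjoint_family_on_def)
  define \<psi> where "\<psi> = (\<lambda>j (v :: nat + nat \<Rightarrow> 'b). (v (Inl j), \<phi> (v (Inl j), v (Inr j))))"
  have \<psi>m: "\<psi> j \<in> PiM (K j) (\<lambda>_. S) \<rightarrow>\<^sub>M S \<Otimes>\<^sub>M S" for j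
  proof -
    have 1: "(\<lambda>v. v (Inl j)) \<in> PiM (K j) (\<lambda>_. S) \<rightarrow>\<^sub>M S"
      by (rule measurable_component_singleton) (simp add: K_def)
    have 2: "(\<lambda>v. v (Inr j)) \<in> PiM (K j) (\<lambda>_. S) \<rightarrow>\<^sub>M S"
      by (rule measurable_component_singleton) (simp add: K_def)
    show ?thesis unfolding \<psi>_def using 1 2 by measurable
  qed
  have "indep_vars (\<lambda>_. S \<Otimes>\<^sub>M S) (\<lambda>j \<omega>. \<psi> j (restrict (\<lambda>k. case_sum X R k \<omega>) (K j))) I"
    by (rule indep_vars_compose2[OF r \<psi>m])
  then have pairs: "indep_vars (\<lambda>_. S \<Otimes>\<^sub>M S) (\<lambda>j \<omega>. (X j \<omega>, Y j \<omega>)) I"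
    by (simp add: \<psi>_def K_def Y_def)
  have split: "indep_vars (\<lambda>_. S) (case_sum X Y) (I <+> I)"
    by (rule indep_split[OF M I pairs]) (simp add: each Y_def)
  have "indep_var (PiM (Inl ` I) (\<lambda>_. S)) (\<lambda>\<omega>. restrict (\<lambda>k. case_sum X Y k \<omega>) (Inl ` I))
                  (PiM (Inr ` I) (\<lambda>_. S)) (\<lambda>\<omega>. restrict (\<lambda>k. case_sum X Y k \<omega>) (Inr ` I))"
    by (rule indep_var_restrict[OF split]) auto
  then have "indep_var (PiM I (\<lambda>_. S)) ((\<lambda>v. \<lambda>j\<in>I. v (Inl j)) \<circ> (\<lambda>\<omega>. restrict (\<lambda>k. case_sum X Y k \<omega>) (Inl ` I)))
                  (PiM I (\<lambda>_. S)) ((\<lambda>v. \<lambda>j\<in>I. v (Inr j)) \<circ> (\<lambda>\<omega>. restrict (\<lambda>k. case_sum X Y k \<omega>) (Inr ` I)))"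
  proof (rule indep_var_compose)
    show "(\<lambda>v. \<lambda>j\<in>I. v (Inl j)) \<in> PiM (Inl ` I) (\<lambda>_. S) \<rightarrow>\<^sub>M PiM I (\<lambda>_. S)"
      by (rule measurable_restrict, rule measurable_component_singleton) auto
    show "(\<lambda>v. \<lambda>j\<in>I. v (Inr j)) \<in> PiM (Inr ` I) (\<lambda>_. S) \<rightarrow>\<^sub>M PiM I (\<lambda>_. S)"
      by (rule measurable_restrict, rule measurable_component_singleton) auto
  qed
  also have "((\<lambda>v. \<lambda>j\<in>I. v (Inl j)) \<circ> (\<lambda>\<omega>. restrict (\<lambda>k. case_sum X Y k \<omega>) (Inl ` I))) = (\<lambda>\<omega>. \<lambda>j\<in>I. X j \<omega>)"
    by (auto simp: fun_eq_iff)
  also have "((\<lambda>v. \<lambda>j\<in>I. v (Inr j)) \<circ> (\<lambda>\<omega>. restrict (\<lambda>k. case_sum X Y k \<omega>) (Inr ` I))) = (\<lambda>\<omega>. \<lambda>j\<in>I. Y j \<omega>)"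
    by (auto simp: fun_eq_iff)
  finally show ?thesis unfolding Y_def .
qed

lemma indep_distr_compose:
  assumes M: "prob_space M" and Xv[measurable]: "Xv \<in> M \<rightarrow>\<^sub>M P1" and Yv[measurable]: "Yv \<in> M \<rightarrow>\<^sub>M P2"
    and G[measurable]: "G \<in> P1 \<rightarrow>\<^sub>M N"
    and eq: "distr M P1 Xv \<Otimes>\<^sub>M distr M P2 Yv = distr M (P1 \<Otimes>\<^sub>M P2) (\<lambda>\<omega>. (Xv \<omega>, Yv \<omega>))"
  shows "distr M N (\<lambda>\<omega>. G (Xv \<omega>)) \<Otimes>\<^sub>M distr M P2 Yv = distr M (N \<Otimes>\<^sub>M P2) (\<lambda>\<omega>. (G (Xv \<omega>), Yv \<omega>))"
proof -
  interpret prob_space M by fact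
  have "distr M N (\<lambda>\<omega>. G (Xv \<omega>)) \<Otimes>\<^sub>M distr M P2 Yv
      = distr (distr M P1 Xv) N G \<Otimes>\<^sub>M distr (distr M P2 Yv) P2 (\<lambda>x. x)"
    by (simp add: distr_distr comp_def distr_id2)
  also have "\<dots> = distr (distr M P1 Xv \<Otimes>\<^sub>M distr M P2 Yv) (N \<Otimes>\<^sub>M P2) (\<lambda>(x, y). (G x, y))"
  proof (rule pair_measure_distr)
    show "sigma_finite_measure (distr (distr M P2 Yv) P2 (\<lambda>x. x))"
      by (simp add: distr_id2 prob_space_imp_sigma_finite prob_space_distr)
  qed simp_all
  also have "\<dots> = distr M (N \<Otimes>\<^sub>M P2) (\<lambda>\<omega>. (G (Xv \<omega>), Yv \<omega>))"
    unfolding eq by (subst distr_distr) (auto simp: comp_def)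
  finally show ?thesis .
qed



lemma generic:
  fixes M :: "'a measure" and X R :: "nat \<Rightarrow> 'a \<Rightarrow> 'b" and S :: "'b measure"
    and \<phi> :: "'b \<times> 'b \<Rightarrow> 'b" and \<sigma> :: "(nat \<Rightarrow> 'b) \<Rightarrow> 'b"
    and \<delta> :: "'b \<times> (nat \<Rightarrow> 'b) \<Rightarrow> 'b" and \<epsilon> :: "(nat \<Rightarrow> 'b) \<times> 'b \<Rightarrow> 'b" and \<rho> :: "'a \<Rightarrow> 'b"
  assumes M: "prob_space M" and i: "i < n"
    and ind: "prob_space.indep_vars M (\<lambda>_. S) (case_sum X R) ({..<n} <+> {..<n})"
    and mi0: "\<And>j. j < n \<Longrightarrow> MI M S S (X j) (\<lambda>\<omega>. \<phi> (X j \<omega>, R j \<omega>)) = 0"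
    and \<phi>m[measurable]: "\<phi> \<in> S \<Otimes>\<^sub>M S \<rightarrow>\<^sub>M S"
    and \<sigma>m[measurable]: "\<sigma> \<in> PiM {..<n} (\<lambda>_. S) \<rightarrow>\<^sub>M S"
    and \<delta>m[measurable]: "\<delta> \<in> S \<Otimes>\<^sub>M PiM {..<n} (\<lambda>_. S) \<rightarrow>\<^sub>M S"
    and \<epsilon>m[measurable]: "\<epsilon> \<in> PiM {..<n} (\<lambda>_. S) \<Otimes>\<^sub>M S \<rightarrow>\<^sub>M S"
    and inv: "\<And>w y. w \<in> space S \<Longrightarrow> y \<in> space (PiM {..<n} (\<lambda>_. S)) \<Longrightarrow> \<epsilon> (y, \<delta> (w, y)) = w"
    and rho: "\<And>\<omega>. \<omega> \<in> space M \<Longrightarrow>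
       \<rho> \<omega> = \<delta> (\<sigma> (\<lambda>j\<in>{..<n}. X j \<omega>), \<lambda>j\<in>{..<n}. \<phi> (X j \<omega>, R j \<omega>))"
  shows "MI M S (PiM {..n} (\<lambda>_. S)) (X i)
           (\<lambda>\<omega>. \<lambda>j\<in>{..n}. if j < n then \<phi> (X j \<omega>, R j \<omega>) else \<rho> \<omega>)
       = MI M S S (X i) (\<lambda>\<omega>. \<sigma> (\<lambda>j\<in>{..<n}. X j \<omega>))"
proof -
  interpret prob_space M by fact
  let ?I = "{..<n}"
  have XRm: "X j \<in> M \<rightarrow>\<^sub>M S" "R j \<in> M \<rightarrow>\<^sub>M S" if "j < n" for j
  proof -
    have "\<forall>k\<in>{..<n} <+> {..<n}. random_variable S (case_sum X R k)"
      using ind unfolding indep_vars_def by auto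
    then show "X j \<in> M \<rightarrow>\<^sub>M S" "R j \<in> M \<rightarrow>\<^sub>M S"
      using that by (metis InlI lessThan_iff sum.case(1), metis InrI lessThan_iff sum.case(2))
  qed
  define Xv where "Xv = (\<lambda>\<omega>. \<lambda>j\<in>?I. X j \<omega>)"
  define Yv where "Yv = (\<lambda>\<omega>. \<lambda>j\<in>?I. \<phi> (X j \<omega>, R j \<omega>))"
  have Xvm[measurable]: "Xv \<in> M \<rightarrow>\<^sub>M PiM ?I (\<lambda>_. S)" unfolding Xv_def
    by (rule measurable_restrict) (simp add: XRm)
  have Yvm[measurable]: "Yv \<in> M \<rightarrow>\<^sub>M PiM ?I (\<lambda>_. S)" unfolding Yv_def
  proof (rule measurable_restrict)
    fix j assume "j \<in> ?I"
    then have [measurable]: "X j \<in> M \<rightarrow>\<^sub>M S" "R j \<in> M \<rightarrow>\<^sub>M S" using XRm by auto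
    show "(\<lambda>\<omega>. \<phi> (X j \<omega>, R j \<omega>)) \<in> M \<rightarrow>\<^sub>M S" by measurable
  qed
  have each: "indep_var S (X j) S (\<lambda>\<omega>. \<phi> (X j \<omega>, R j \<omega>))" if "j \<in> ?I" for j
  proof (rule MI_zero_indep[OF M])
    have [measurable]: "X j \<in> M \<rightarrow>\<^sub>M S" "R j \<in> M \<rightarrow>\<^sub>M S" using XRm that by auto
    show "X j \<in> M \<rightarrow>\<^sub>M S" by simp
    show "(\<lambda>\<omega>. \<phi> (X j \<omega>, R j \<omega>)) \<in> M \<rightarrow>\<^sub>M S" by measurable
    show "MI M S S (X j) (\<lambda>\<omega>. \<phi> (X j \<omega>, R j \<omega>)) = 0" using mi0 that by simp
  qed
  have ne: "?I \<noteq> {}" using i by auto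
  have iv: "indep_var (PiM ?I (\<lambda>_. S)) Xv (PiM ?I (\<lambda>_. S)) Yv"
    unfolding Xv_def Yv_def by (rule vec_indep[OF M _ ne ind \<phi>m each]) auto
  then have eqv: "distr M (PiM ?I (\<lambda>_. S)) Xv \<Otimes>\<^sub>M distr M (PiM ?I (\<lambda>_. S)) Yv =
      distr M (PiM ?I (\<lambda>_. S) \<Otimes>\<^sub>M PiM ?I (\<lambda>_. S)) (\<lambda>\<omega>. (Xv \<omega>, Yv \<omega>))"
    by (simp add: indep_var_distribution_eq)
  define G where "G = (\<lambda>v::nat \<Rightarrow> 'b. (v i, \<sigma> v))"
  have Gm: "G \<in> PiM ?I (\<lambda>_. S) \<rightarrow>\<^sub>M S \<Otimes>\<^sub>M S"
  proof -
    have [measurable]: "(\<lambda>v. v i) \<in> PiM ?I (\<lambda>_. S) \<rightarrow>\<^sub>M S"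
      by (rule measurable_component_singleton) (simp add: i)
    show ?thesis unfolding G_def by measurable
  qed
  have indG: "distr M (S \<Otimes>\<^sub>M S) (\<lambda>\<omega>. G (Xv \<omega>)) \<Otimes>\<^sub>M distr M (PiM ?I (\<lambda>_. S)) Yv =
      distr M ((S \<Otimes>\<^sub>M S) \<Otimes>\<^sub>M PiM ?I (\<lambda>_. S)) (\<lambda>\<omega>. (G (Xv \<omega>), Yv \<omega>))"
    by (rule indep_distr_compose[OF M Xvm Yvm Gm eqv])
  have GX: "G (Xv \<omega>) = (X i \<omega>, \<sigma> (Xv \<omega>))" for \<omega> by (simp add: G_def Xv_def i)
  define g where "g = (\<lambda>p::'b \<times> (nat \<Rightarrow> 'b). \<lambda>j\<in>{..n}. if j < n then snd p j else \<delta> p)"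
  define h where "h = (\<lambda>z::nat \<Rightarrow> 'b. (\<epsilon> (restrict z ?I, z n), restrict z ?I))"
  have gm: "g \<in> S \<Otimes>\<^sub>M PiM ?I (\<lambda>_. S) \<rightarrow>\<^sub>M PiM {..n} (\<lambda>_. S)"
    unfolding g_def
  proof (rule measurable_restrict)
    fix j assume "j \<in> {..n}"
    show "(\<lambda>p. if j < n then snd p j else \<delta> p) \<in> S \<Otimes>\<^sub>M PiM ?I (\<lambda>_. S) \<rightarrow>\<^sub>M S"
    proof (cases "j < n")
      case True
      have [measurable]: "(\<lambda>v. v j) \<in> PiM ?I (\<lambda>_. S) \<rightarrow>\<^sub>M S"
        by (rule measurable_component_singleton) (simp add: True)
      show ?thesis using True by simp
    qed simp
  qed
  have hm: "h \<in> PiM {..n} (\<lambda>_. S) \<rightarrow>\<^sub>M S \<Otimes>\<^sub>M PiM ?I (\<lambda>_. S)"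
  proof -
    have [measurable]: "(\<lambda>z. restrict z ?I) \<in> PiM {..n} (\<lambda>_. S) \<rightarrow>\<^sub>M PiM ?I (\<lambda>_. S)"
      by (rule measurable_restrict_subset) auto
    have [measurable]: "(\<lambda>z. z n) \<in> PiM {..n} (\<lambda>_. S) \<rightarrow>\<^sub>M S"
      by (rule measurable_component_singleton) simp
    show ?thesis unfolding h_def by measurable
  qed
  have hg: "h (g x) = x" if "x \<in> space (S \<Otimes>\<^sub>M PiM ?I (\<lambda>_. S))" for x
  proof -
    obtain w y where x: "x = (w, y)" by (cases x)
    have w: "w \<in> space S" and y: "y \<in> space (PiM ?I (\<lambda>_. S))"
      using that by (auto simp: x space_pair_measure)
    have ye: "y \<in> PiE ?I (\<lambda>_. space S)" using y by (simp add: space_PiM)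
    have r: "restrict (g x) ?I = y"
      using ye by (auto simp: g_def x fun_eq_iff PiE_def extensional_def)
    have gn: "g x n = \<delta> (w, y)" by (simp add: g_def x)
    show ?thesis unfolding h_def r gn using inv[OF w y] by (simp add: x)
  qed
  define Z where "Z = (\<lambda>\<omega>. \<lambda>j\<in>{..n}. if j < n then \<phi> (X j \<omega>, R j \<omega>) else \<rho> \<omega>)"
  have Zg: "Z \<omega> = g (\<sigma> (Xv \<omega>), Yv \<omega>)" if "\<omega> \<in> space M" for \<omega>
    using rho[OF that] by (auto simp: Z_def g_def Yv_def Xv_def fun_eq_iff)
  have Zm: "Z \<in> M \<rightarrow>\<^sub>M PiM {..n} (\<lambda>_. S)"
  proof -
    have "(\<lambda>\<omega>. g (\<sigma> (Xv \<omega>), Yv \<omega>)) \<in> M \<rightarrow>\<^sub>M PiM {..n} (\<lambda>_. S)"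
      using gm by measurable
    then show ?thesis by (rule measurable_cong[THEN iffD1, rotated]) (simp add: Zg)
  qed
  have Xim: "X i \<in> M \<rightarrow>\<^sub>M S" using XRm i by simp
  have Wm: "(\<lambda>\<omega>. \<sigma> (Xv \<omega>)) \<in> M \<rightarrow>\<^sub>M S" by measurable
  have indA: "distr M (S \<Otimes>\<^sub>M S) (\<lambda>\<omega>. (X i \<omega>, \<sigma> (Xv \<omega>))) \<Otimes>\<^sub>M distr M (PiM ?I (\<lambda>_. S)) Yv =
      distr M ((S \<Otimes>\<^sub>M S) \<Otimes>\<^sub>M PiM ?I (\<lambda>_. S)) (\<lambda>\<omega>. ((X i \<omega>, \<sigma> (Xv \<omega>)), Yv \<omega>))"
    using indG unfolding GX .
  have "MI M S (PiM {..n} (\<lambda>_. S)) (X i) Z = MI M S S (X i) (\<lambda>\<omega>. \<sigma> (Xv \<omega>))"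
    by (rule MI_main[OF M Xim Wm Yvm Zm indA gm hm hg Zg])
  then show ?thesis unfolding Z_def Xv_def .
qed



lemma sets_PiM_count:
  assumes I: "finite I" and A: "finite A"
  shows "sets (PiM I (\<lambda>_. count_space A)) = Pow (PiE I (\<lambda>_. A))"
proof
  show "sets (PiM I (\<lambda>_. count_space A)) \<subseteq> Pow (PiE I (\<lambda>_. A))"
    using sets.sets_into_space[of _ "PiM I (\<lambda>_. count_space A)"] by (auto simp: space_PiM)
  show "Pow (PiE I (\<lambda>_. A)) \<subseteq> sets (PiM I (\<lambda>_. count_space A))"
  proof
    fix B assume B: "B \<in> Pow (PiE I (\<lambda>_. A))"
    have fin: "finite (PiE I (\<lambda>_. A))" using I A by (simp add: finite_PiE)
    show "B \<in> sets (PiM I (\<lambda>_. count_space A))"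
    proof (rule sets.countable)
      fix a assume a: "a \<in> B"
      then have aP: "a \<in> PiE I (\<lambda>_. A)" using B by auto
      have "{a} = PiE I (\<lambda>j. {a j})"
        using aP by (intro PiE_singleton[symmetric]) (simp add: PiE_def)
      also have "\<dots> \<in> sets (PiM I (\<lambda>_. count_space A))"
        using aP I by (intro sets_PiM_I_finite) (auto simp: PiE_def)
      finally show "{a} \<in> sets (PiM I (\<lambda>_. count_space A))" .
    next
      show "countable B" using B fin by (auto intro: countable_finite finite_subset)
    qed
  qed
qed

lemma meas_pow:
  assumes "sets N = Pow D" "\<And>x. x \<in> D \<Longrightarrow> f x \<in> space K"
  shows "f \<in> N \<rightarrow>\<^sub>M K"
proof -
  have "sets N = sets (count_space D)" using assms(1) by simp
  moreover have "f \<in> count_space D \<rightarrow>\<^sub>M K" using assms(2) by auto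
  ultimately show ?thesis
    using measurable_cong_sets[of N "count_space D" K K] by simp
qed

lemma modlem1:
  fixes a w p :: nat assumes "w < p"
  shows "(a + p - (a + p - w) mod p) mod p = w"
proof -
  have "(a + p - w) mod p < p" using assms by simp
  then have le: "(a + p - w) mod p \<le> a + p" by linarith
  have "int ((a + p - (a + p - w) mod p) mod p) = (int a + int p - (int a + int p - int w) mod int p) mod int p"
    using le assms by (simp add: of_nat_diff zmod_int)
  also have "\<dots> = (int a + int p - (int a + int p - int w)) mod int p"
    by (simp add: mod_diff_right_eq)
  also have "\<dots> = int w" using assms by simp
  finally show ?thesis by linarith
qed

lemma modlem2:
  fixes Y A B p :: nat assumes p: "p > 0" and h: "Y mod p = (A + B) mod p"
  shows "(Y + p - A mod p) mod p = B mod p"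
proof -
  have "A mod p < p" using p by simp
  then have le: "A mod p \<le> Y + p" by linarith
  have "int ((Y + p - A mod p) mod p) = (int Y + int p - int A mod int p) mod int p"
    using le by (simp add: of_nat_diff zmod_int)
  also have "\<dots> = (int Y + int p - int A) mod int p"
    by (simp add: mod_diff_right_eq)
  also have "\<dots> = (int Y mod int p - int A) mod int p"
    by (metis add_diff_eq mod_add_self2 mod_diff_left_eq)
  also have "int Y mod int p = (int A + int B) mod int p" using h by (metis of_nat_add zmod_int)
  also have "((int A + int B) mod int p - int A) mod int p = int B mod int p"
    by (simp add: mod_diff_left_eq)
  finally have "int ((Y + p - A mod p) mod p) = int B mod int p" .
  then show ?thesis by (metis of_nat_eq_iff zmod_int)
qed



lemma real_case:
  fixes M :: "'a measure" and X R :: "nat \<Rightarrow> 'a \<Rightarrow> real"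
  assumes M: "prob_space M" and i: "i < n"
    and ind: "prob_space.indep_vars M (\<lambda>_. borel) (case_sum X R) ({..<n} <+> {..<n})"
    and mi: "\<forall>i<n. MI M borel borel (X i) (\<lambda>\<omega>. X i \<omega> + R i \<omega>) = 0"
  shows "MI M borel (PiM {..n} (\<lambda>_. borel)) (X i)
                 (\<lambda>\<omega>. \<lambda>j\<in>{..n}. if j < n then X j \<omega> + R j \<omega> else (\<Sum>k<n. R k \<omega>))
            = MI M borel borel (X i) (\<lambda>\<omega>. \<Sum>j<n. X j \<omega>)"
proof -
  have G: "MI M borel (PiM {..n} (\<lambda>_. borel)) (X i)
           (\<lambda>\<omega>. \<lambda>j\<in>{..n}. if j < n then (\<lambda>q. fst q + snd q) (X j \<omega>, R j \<omega>) else (\<lambda>\<omega>. \<Sum>k<n. R k \<omega>) \<omega>)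
       = MI M borel borel (X i) (\<lambda>\<omega>. (\<lambda>v. \<Sum>j<n. v j) (\<lambda>j\<in>{..<n}. X j \<omega>))"
  proof (rule generic[OF M i ind])
    show "MI M borel borel (X j) (\<lambda>\<omega>. (\<lambda>q. fst q + snd q) (X j \<omega>, R j \<omega>)) = 0" if "j < n" for j
      using mi that by simp
    show "(\<lambda>q::real \<times> real. fst q + snd q) \<in> borel \<Otimes>\<^sub>M borel \<rightarrow>\<^sub>M borel" by measurable
    show "(\<lambda>v::nat \<Rightarrow> real. \<Sum>j<n. v j) \<in> PiM {..<n} (\<lambda>_. borel) \<rightarrow>\<^sub>M borel" by measurable
    show "(\<lambda>q::real \<times> (nat \<Rightarrow> real). (\<Sum>k<n. snd q k) - fst q) \<in> borel \<Otimes>\<^sub>M PiM {..<n} (\<lambda>_. borel) \<rightarrow>\<^sub>M borel"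
      by measurable
    show "(\<lambda>q::(nat \<Rightarrow> real) \<times> real. (\<Sum>k<n. fst q k) - snd q) \<in> PiM {..<n} (\<lambda>_. borel) \<Otimes>\<^sub>M borel \<rightarrow>\<^sub>M borel"
      by measurable
    show "(\<lambda>q. (\<Sum>k<n. fst q k) - snd q) (y, (\<lambda>q. (\<Sum>k<n. snd q k) - fst q) (w, y)) = w" for w :: real and y
      by simp
    show "(\<lambda>\<omega>. \<Sum>k<n. R k \<omega>) \<omega> = (\<lambda>q. (\<Sum>k<n. snd q k) - fst q)
       ((\<lambda>v. \<Sum>j<n. v j) (\<lambda>j\<in>{..<n}. X j \<omega>), \<lambda>j\<in>{..<n}. (\<lambda>q. fst q + snd q) (X j \<omega>, R j \<omega>))" for \<omega>
      by (simp add: sum.distrib)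
  qed
  have eq: "(\<lambda>\<omega>. \<Sum>j<n. (\<lambda>j\<in>{..<n}. X j \<omega>) j) = (\<lambda>\<omega>. \<Sum>j<n. X j \<omega>)" by simp
  show ?thesis using G unfolding eq fst_conv snd_conv .
qed

lemma mod_case:
  fixes M :: "'a measure" and X R :: "nat \<Rightarrow> 'a \<Rightarrow> nat" and p :: nat
  assumes M: "prob_space M" and i: "i < n" and p: "0 < p"
    and ind: "prob_space.indep_vars M (\<lambda>_. count_space {0..<p}) (case_sum X R) ({..<n} <+> {..<n})"
    and mi: "\<forall>i<n. MI M (count_space {0..<p}) (count_space {0..<p}) (X i)
                  (\<lambda>\<omega>. (X i \<omega> + R i \<omega>) mod p) = 0"
  shows "MI M (count_space {0..<p}) (PiM {..n} (\<lambda>_. count_space {0..<p})) (X i)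
                 (\<lambda>\<omega>. \<lambda>j\<in>{..n}. if j < n then (X j \<omega> + R j \<omega>) mod p else (\<Sum>k<n. R k \<omega>) mod p)
            = MI M (count_space {0..<p}) (count_space {0..<p}) (X i) (\<lambda>\<omega>. (\<Sum>j<n. X j \<omega>) mod p)"
proof -
  let ?S = "count_space {0..<p}"
  let ?P = "PiE {..<n} (\<lambda>_. {0..<p::nat})"
  have sP: "sets (PiM {..<n} (\<lambda>_. ?S)) = Pow ?P" by (rule sets_PiM_count) auto
  have cP: "countable ?P" by (rule countable_finite) (simp add: finite_PiE)
  have s1: "sets (?S \<Otimes>\<^sub>M ?S) = Pow ({0..<p} \<times> {0..<p})"
    by (rule sets_pair_countable) auto
  have s2: "sets (?S \<Otimes>\<^sub>M PiM {..<n} (\<lambda>_. ?S)) = Pow ({0..<p} \<times> ?P)"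
    by (rule sets_pair_countable[OF _ cP]) (auto simp: sP)
  have s3: "sets (PiM {..<n} (\<lambda>_. ?S) \<Otimes>\<^sub>M ?S) = Pow (?P \<times> {0..<p})"
    by (rule sets_pair_countable[OF cP]) (auto simp: sP)
  have G: "MI M ?S (PiM {..n} (\<lambda>_. ?S)) (X i)
           (\<lambda>\<omega>. \<lambda>j\<in>{..n}. if j < n then (\<lambda>q. (fst q + snd q) mod p) (X j \<omega>, R j \<omega>) else (\<lambda>\<omega>. (\<Sum>k<n. R k \<omega>) mod p) \<omega>)
       = MI M ?S ?S (X i) (\<lambda>\<omega>. (\<lambda>v. (\<Sum>j<n. v j) mod p) (\<lambda>j\<in>{..<n}. X j \<omega>))"
  proof (rule generic[OF M i ind])
    show "MI M ?S ?S (X j) (\<lambda>\<omega>. (\<lambda>q. (fst q + snd q) mod p) (X j \<omega>, R j \<omega>)) = 0" if "j < n" for j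
      using mi that by simp
    show "(\<lambda>q::nat \<times> nat. (fst q + snd q) mod p) \<in> ?S \<Otimes>\<^sub>M ?S \<rightarrow>\<^sub>M ?S"
      by (rule meas_pow[OF s1]) (simp add: p)
    show "(\<lambda>v::nat \<Rightarrow> nat. (\<Sum>j<n. v j) mod p) \<in> PiM {..<n} (\<lambda>_. ?S) \<rightarrow>\<^sub>M ?S"
      by (rule meas_pow[OF sP]) (simp add: p)
    show "(\<lambda>q::nat \<times> (nat \<Rightarrow> nat). ((\<Sum>k<n. snd q k) + p - fst q) mod p) \<in> ?S \<Otimes>\<^sub>M PiM {..<n} (\<lambda>_. ?S) \<rightarrow>\<^sub>M ?S"
      by (rule meas_pow[OF s2]) (simp add: p)
    show "(\<lambda>q::(nat \<Rightarrow> nat) \<times> nat. ((\<Sum>k<n. fst q k) + p - snd q) mod p) \<in> PiM {..<n} (\<lambda>_. ?S) \<Otimes>\<^sub>M ?S \<rightarrow>\<^sub>M ?S"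
      by (rule meas_pow[OF s3]) (simp add: p)
    show "(\<lambda>q. ((\<Sum>k<n. fst q k) + p - snd q) mod p) (y, (\<lambda>q. ((\<Sum>k<n. snd q k) + p - fst q) mod p) (w, y)) = w"
      if "w \<in> space ?S" for w :: nat and y
      using that by (simp add: modlem1)
    show "(\<lambda>\<omega>. (\<Sum>k<n. R k \<omega>) mod p) \<omega> = (\<lambda>q. ((\<Sum>k<n. snd q k) + p - fst q) mod p)
       ((\<lambda>v. (\<Sum>j<n. v j) mod p) (\<lambda>j\<in>{..<n}. X j \<omega>), \<lambda>j\<in>{..<n}. (\<lambda>q. (fst q + snd q) mod p) (X j \<omega>, R j \<omega>))" for \<omega>
    proof -
      have h: "(\<Sum>k<n. (X k \<omega> + R k \<omega>) mod p) mod p = ((\<Sum>k<n. X k \<omega>) + (\<Sum>k<n. R k \<omega>)) mod p"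
        by (simp add: mod_sum_eq sum.distrib)
      show ?thesis using modlem2[OF p h] by simp
    qed
  qed
  have eq: "(\<lambda>\<omega>. (\<Sum>j<n. (\<lambda>j\<in>{..<n}. X j \<omega>) j) mod p) = (\<lambda>\<omega>. (\<Sum>j<n. X j \<omega>) mod p)" by simp
  show ?thesis using G unfolding eq fst_conv snd_conv .
qed


theorem mainTheorem4:
  fixes M :: "'a measure" and n :: nat
  assumes "prob_space M"
  shows
    "(\<forall>(X :: nat \<Rightarrow> 'a \<Rightarrow> real) (R :: nat \<Rightarrow> 'a \<Rightarrow> real).
        prob_space.indep_vars M (\<lambda>_. borel) (case_sum X R) ({..<n} <+> {..<n}) \<and>
        (\<forall>i<n. MI M borel borel (X i) (\<lambda>\<omega>. X i \<omega> + R i \<omega>) = 0)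
        \<longrightarrow> (\<forall>i<n.
              MI M borel (PiM {..n} (\<lambda>_. borel)) (X i)
                 (\<lambda>\<omega>. \<lambda>j\<in>{..n}. if j < n then X j \<omega> + R j \<omega> else (\<Sum>k<n. R k \<omega>))
            = MI M borel borel (X i) (\<lambda>\<omega>. \<Sum>j<n. X j \<omega>)))
   \<and>
    (\<forall>(p :: nat) (X :: nat \<Rightarrow> 'a \<Rightarrow> nat) (R :: nat \<Rightarrow> 'a \<Rightarrow> nat).
        0 < p \<and>
        prob_space.indep_vars M (\<lambda>_. count_space {0..<p}) (case_sum X R) ({..<n} <+> {..<n}) \<and>
        (\<forall>i<n. MI M (count_space {0..<p}) (count_space {0..<p}) (X i)
                  (\<lambda>\<omega>. (X i \<omega> + R i \<omega>) mod p) = 0)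
        \<longrightarrow> (\<forall>i<n.
              MI M (count_space {0..<p}) (PiM {..n} (\<lambda>_. count_space {0..<p})) (X i)
                 (\<lambda>\<omega>. \<lambda>j\<in>{..n}. if j < n then (X j \<omega> + R j \<omega>) mod p else (\<Sum>k<n. R k \<omega>) mod p)
            = MI M (count_space {0..<p}) (count_space {0..<p}) (X i) (\<lambda>\<omega>. (\<Sum>j<n. X j \<omega>) mod p)))"
  proof (intro conjI allI impI)
  fix X R :: "nat \<Rightarrow> 'a \<Rightarrow> real" and i
  assume h: "prob_space.indep_vars M (\<lambda>_. borel) (case_sum X R) ({..<n} <+> {..<n}) \<and>
        (\<forall>i<n. MI M borel borel (X i) (\<lambda>\<omega>. X i \<omega> + R i \<omega>) = 0)" and i: "i < n"
  show "MI M borel (PiM {..n} (\<lambda>_. borel)) (X i)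
                 (\<lambda>\<omega>. \<lambda>j\<in>{..n}. if j < n then X j \<omega> + R j \<omega> else (\<Sum>k<n. R k \<omega>))
            = MI M borel borel (X i) (\<lambda>\<omega>. \<Sum>j<n. X j \<omega>)"
    using real_case[OF assms i] h by blast
next
  fix p :: nat and X R :: "nat \<Rightarrow> 'a \<Rightarrow> nat" and i
  assume h: "0 < p \<and>
        prob_space.indep_vars M (\<lambda>_. count_space {0..<p}) (case_sum X R) ({..<n} <+> {..<n}) \<and>
        (\<forall>i<n. MI M (count_space {0..<p}) (count_space {0..<p}) (X i)
                  (\<lambda>\<omega>. (X i \<omega> + R i \<omega>) mod p) = 0)" and i: "i < n"
  show "MI M (count_space {0..<p}) (PiM {..n} (\<lambda>_. count_space {0..<p})) (X i)
                 (\<lambda>\<omega>. \<lambda>j\<in>{..n}. if j < n then (X j \<omega> + R j \<omega>) mod p else (\<Sum>k<n. R k \<omega>) mod p)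
            = MI M (count_space {0..<p}) (count_space {0..<p}) (X i) (\<lambda>\<omega>. (\<Sum>j<n. X j \<omega>) mod p)"
    using mod_case[OF assms i] h by blast
qed

end
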